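(* Consider the $r$-cGA (without frequency borders) maximizing $r$-OneMax on $\{0,\dots,r-1\}^n$, and suppose that at some time the frequency $p^{(t)}_{i,r-1}$ has reached a value of at least $k/r$, where $k>0$. Suppose $K\ge c\,r\sqrt{n}\log n$ for a sufficiently large constant $c$, and $K$ and $r$ are bounded by polynomials in $n$. Then, for a constant $c'>0$, the probability that $p^{(t)}_{i,r-1}$ drops below $k/r-1/(2r)$ within the next $T^{*}=c'K\sqrt{n}\log r$ iterations is at most $n^{-c''}$, where $c''\ge K/(288r\sqrt{n}\ln n)$.
   Context: Let $n\ge 1$, $r\ge 2$ be integers and $K>0$. $r$-OneMax$(x)=\sum_{i=1}^n \mathbf 1[x_i=r-1]$ for $x\in\{0,\dots,r-1\}^n$. The $r$-valued compact genetic algorithm ($r$-cGA) with parameter $K$ maintains frequencies $p^{(t)}_{i,j}$ for $i\in\{1,\dots,n\}$, $j\in\{0,\dots,r-1\}$, initially all $1/r$. In iteration $t$ it samples two strings $x,y$ independently, each position $i$ of each string taking value $j$ with probability $p^{(t)}_{i,j}$ independently of other positions; if $f(x)<f(y)$ then $x$ and $y$ are swapped; then for all $i,j$, $p^{(t+1)}_{i,j}=p^{(t)}_{i,j}+\frac1K(\mathbf 1[x_i=j]-\mathbf 1[y_i=j])$. Here $f$ is the function to be maximized. *)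

theory Defs
  imports "HOL-Probability.Probability"
begin

text \<open>Strings in {0,...,r-1}^n are modelled as functions nat => nat (positions 0..n-1).
  A state of the r-cGA is the frequency matrix p i j (position i < n, value j < r).\<close>

definition r_onemax :: "nat \<Rightarrow> nat \<Rightarrow> (nat \<Rightarrow> nat) \<Rightarrow> nat" where
  "r_onemax n r x = card {i. i < n \<and> x i = r - 1}"

text \<open>To make the
  definition total, negative entries are clipped to 0 and the weights renormalised;
  for genuine probability vectors this is exactly the distribution (p i j)_j.\<close>

definition pos_pmf :: "nat \<Rightarrow> (nat \<Rightarrow> nat \<Rightarrow> real) \<Rightarrow> nat \<Rightarrow> nat pmf" where
  "pos_pmf r p i =
     (let S = (\<Sum>j<r. max 0 (p i j)) in
      if S > 0 then embed_pmf (\<lambda>j. if j < r then max 0 (p i j) / S else 0)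
      else return_pmf 0)"

definition sample_string :: "nat \<Rightarrow> nat \<Rightarrow> (nat \<Rightarrow> nat \<Rightarrow> real) \<Rightarrow> (nat \<Rightarrow> nat) pmf" where
  "sample_string n r p = Pi_pmf {..<n} 0 (pos_pmf r p)"

definition cga_update :: "real \<Rightarrow> (nat \<Rightarrow> nat \<Rightarrow> real) \<Rightarrow> (nat \<Rightarrow> nat) \<Rightarrow> (nat \<Rightarrow> nat)
    \<Rightarrow> (nat \<Rightarrow> nat \<Rightarrow> real)" where
  "cga_update K p x y =
     (\<lambda>i j. p i j + (1 / K) * ((if x i = j then 1 else 0) - (if y i = j then 1 else 0)))"

definition cga_step :: "nat \<Rightarrow> nat \<Rightarrow> real \<Rightarrow> (nat \<Rightarrow> nat \<Rightarrow> real) \<Rightarrow> (nat \<Rightarrow> nat \<Rightarrow> real) pmf" where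
  "cga_step n r K p =
     bind_pmf (sample_string n r p) (\<lambda>x.
     bind_pmf (sample_string n r p) (\<lambda>y.
       return_pmf (if r_onemax n r x < r_onemax n r y then cga_update K p y x
                   else cga_update K p x y)))"

definition cga_init :: "nat \<Rightarrow> nat \<Rightarrow> nat \<Rightarrow> real" where
  "cga_init r = (\<lambda>i j. 1 / real r)"

fun cga_state :: "nat \<Rightarrow> nat \<Rightarrow> real \<Rightarrow> nat \<Rightarrow> (nat \<Rightarrow> nat \<Rightarrow> real) pmf" where
  "cga_state n r K 0 = return_pmf (cga_init r)"
| "cga_state n r K (Suc t) = bind_pmf (cga_state n r K t) (cga_step n r K)"

fun cga_path :: "nat \<Rightarrow> nat \<Rightarrow> real \<Rightarrow> (nat \<Rightarrow> nat \<Rightarrow> real) \<Rightarrow> nat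
    \<Rightarrow> (nat \<Rightarrow> nat \<Rightarrow> real) list pmf" where
  "cga_path n r K p 0 = return_pmf []"
| "cga_path n r K p (Suc m) =
     bind_pmf (cga_step n r K p) (\<lambda>q. map_pmf (\<lambda>qs. q # qs) (cga_path n r K q m))"

end

theory Submission
  imports Defs
begin


lemma hoeff_aux:
  fixes B :: "nat set" and P :: "nat \<Rightarrow> nat pmf" and v :: nat
  assumes fin: "finite B" and cardB: "card B \<ge> 1"
  shows "\<exists>\<mu>. measure_pmf.prob (Pi_pmf B 0 P) {g. \<bar>real (card {j\<in>B. g j = v}) - \<mu>\<bar> \<ge> sqrt (card B)} \<le> 2 * exp (-2)"
proof -
  let ?G = "Pi_pmf B 0 P"
  let ?X = "\<lambda>j (g::nat\<Rightarrow>nat). if g j = v then 1 else (0::real)"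
  interpret H: Hoeffding_ineq "measure_pmf ?G" B ?X "\<lambda>_. 0" "\<lambda>_. 1" "(\<Sum>j\<in>B. measure_pmf.expectation ?G (?X j))"
  proof unfold_locales
    show "prob_space.indep_vars (measure_pmf ?G) (\<lambda>_. borel) ?X B"
      by (intro prob_space.indep_vars_compose2[OF _ indep_vars_Pi_pmf[OF fin]])
         (auto simp: measure_pmf.prob_space_axioms)
  qed (auto simp: fin)
  have sumX: "(\<Sum>j\<in>B. ?X j g) = real (card {j\<in>B. g j = v})" for g
  proof -
    have "(\<Sum>j\<in>B. ?X j g) = (\<Sum>j\<in>{j\<in>B. g j = v}. 1)"
      by (intro sum.mono_neutral_cong_right) (auto simp: fin)
    thus ?thesis by simp
  qed
  have pos: "(\<Sum>i\<in>B. ((\<lambda>_. 1::real) i - (\<lambda>_. 0) i)\<^sup>2) > 0" using cardB by simp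
  have "measure_pmf.prob ?G {x \<in> space (measure_pmf ?G). \<bar>(\<Sum>i\<in>B. ?X i x) - (\<Sum>j\<in>B. measure_pmf.expectation ?G (?X j))\<bar> \<ge> sqrt (card B)}
     \<le> 2 * exp (-2 * (sqrt (card B))\<^sup>2 / (\<Sum>i\<in>B. ((\<lambda>_. 1::real) i - (\<lambda>_. 0) i)\<^sup>2))"
    by (rule H.Hoeffding_ineq_abs_ge) (use pos in auto)
  also have "(\<Sum>i\<in>B. ((\<lambda>_. 1::real) i - (\<lambda>_. 0) i)\<^sup>2) = card B" by simp
  also have "-2 * (sqrt (card B))\<^sup>2 / card B = -2" using cardB by simp
  finally show ?thesis by (intro exI[of _ "(\<Sum>j\<in>B. measure_pmf.expectation ?G (?X j))"]) (simp add: sumX)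
qed



lemma cs_sum:
  fixes a :: "nat \<Rightarrow> real"
  assumes "finite T"
  shows "(\<Sum>k\<in>T. a k)\<^sup>2 \<le> real (card T) * (\<Sum>k\<in>T. (a k)\<^sup>2)"
proof -
  have "(\<Sum>k\<in>T. 1 * a k)\<^sup>2 \<le> (\<Sum>k\<in>T. 1\<^sup>2) * (\<Sum>k\<in>T. (a k)\<^sup>2)"
    by (rule Cauchy_Schwarz_ineq_sum)
  thus ?thesis by simp
qed

lemma card_window:
  fixes \<mu> w :: real
  assumes "w \<ge> 0"
  shows "finite {k::nat. \<bar>real k - \<mu>\<bar> < w} \<and> real (card {k::nat. \<bar>real k - \<mu>\<bar> < w}) \<le> 2 * w + 1"
proof -
  define m where "m = nat \<lceil>\<mu> - w\<rceil>"
  define l where "l = nat \<lfloor>2 * w\<rfloor>"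
  have sub: "{k::nat. \<bar>real k - \<mu>\<bar> < w} \<subseteq> {m..m+l}"
  proof
    fix k assume "k \<in> {k::nat. \<bar>real k - \<mu>\<bar> < w}"
    hence k1: "real k > \<mu> - w" and k2: "real k < \<mu> + w" by auto
    have "m \<le> k" unfolding m_def using k1
      by (metis ceiling_le_iff less_eq_real_def nat_le_iff of_int_of_nat_eq)
    moreover have "k \<le> m + l"
    proof -
      have "real k - real m < 2 * w" unfolding m_def using k2
        by (smt (verit) of_nat_nat le_of_int_ceiling ceiling_le_zero of_nat_0_le_iff)
      hence "int k - int m \<le> \<lfloor>2*w\<rfloor>" by (metis floor_mono le_floor_iff less_eq_real_def of_int_diff of_int_of_nat_eq)
      thus ?thesis unfolding l_def using assms by linarith
    qed
    ultimately show "k \<in> {m..m+l}" by auto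
  qed
  have "card {k::nat. \<bar>real k - \<mu>\<bar> < w} \<le> card {m..m+l}" by (rule card_mono[OF _ sub]) auto
  also have "card {m..m+l} = l + 1" by simp
  finally have "real (card {k::nat. \<bar>real k - \<mu>\<bar> < w}) \<le> real l + 1" by linarith
  also have "real l \<le> 2 * w" unfolding l_def using assms by linarith
  finally show ?thesis using finite_subset[OF sub] by simp
qed

lemma collision:
  fixes B :: "nat set" and P :: "nat \<Rightarrow> nat pmf" and v :: nat
  assumes fin: "finite B" and cardB: "card B \<ge> 1"
  shows "measure_pmf.prob (pair_pmf (Pi_pmf B 0 P) (Pi_pmf B 0 P))
           {z. card {j\<in>B. fst z j = v} = card {j\<in>B. snd z j = v}} \<ge> 1 / (12 * sqrt (card B))"
proof -
  define G where "G = Pi_pmf B 0 P"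
  define Rc where "Rc = (\<lambda>g::nat\<Rightarrow>nat. card {j\<in>B. g j = v})"
  define \<rho> where "\<rho> = map_pmf Rc G"
  define N where "N = real (card B)"
  have N1: "N \<ge> 1" using cardB unfolding N_def by simp
  obtain \<mu> where h: "measure_pmf.prob G {g. \<bar>real (Rc g) - \<mu>\<bar> \<ge> sqrt N} \<le> 2 * exp (-2)"
    using hoeff_aux[OF fin cardB, of P v] unfolding G_def Rc_def N_def by blast
  define T where "T = {k::nat. \<bar>real k - \<mu>\<bar> < sqrt N}"
  have cw: "finite T" "real (card T) \<le> 2 * sqrt N + 1"
    using card_window[of "sqrt N" \<mu>] N1 unfolding T_def by auto
  have e2: "exp (-2::real) \<le> 1/4"
  proof -
    have "exp (1::real) \<ge> 2" using exp_ge_add_one_self[of 1] by simp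
    hence "exp (1::real) * exp 1 \<ge> 2 * 2" by (intro mult_mono) auto
    hence "exp (2::real) \<ge> 4" by (simp add: mult_exp_exp)
    thus ?thesis by (simp add: exp_minus field_simps)
  qed
  have "measure_pmf.prob G {g. Rc g \<in> T} = 1 - measure_pmf.prob G {g. \<bar>real (Rc g) - \<mu>\<bar> \<ge> sqrt N}"
  proof -
    have "{g. Rc g \<in> T} = UNIV - {g. \<bar>real (Rc g) - \<mu>\<bar> \<ge> sqrt N}" unfolding T_def by auto
    moreover have "measure_pmf.prob G (space (measure_pmf G) - {g. \<bar>real (Rc g) - \<mu>\<bar> \<ge> sqrt N}) = 1 - measure_pmf.prob G {g. \<bar>real (Rc g) - \<mu>\<bar> \<ge> sqrt N}"
      by (rule measure_pmf.prob_compl) auto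
    ultimately show ?thesis by simp
  qed
  hence PT: "measure_pmf.prob \<rho> T \<ge> 1/2" using h e2 unfolding \<rho>_def by (simp add: vimage_def)
  have PTsum: "measure_pmf.prob \<rho> T = (\<Sum>k\<in>T. pmf \<rho> k)"
    using cw(1) by (simp add: measure_measure_pmf_finite)
  have "(1/2)\<^sup>2 \<le> (\<Sum>k\<in>T. pmf \<rho> k)\<^sup>2" using PT PTsum by (intro power_mono) auto
  also have "\<dots> \<le> real (card T) * (\<Sum>k\<in>T. (pmf \<rho> k)\<^sup>2)" by (rule cs_sum[OF cw(1)])
  also have "\<dots> \<le> (3 * sqrt N) * (\<Sum>k\<in>T. (pmf \<rho> k)\<^sup>2)"
  proof (rule mult_right_mono)
    have "sqrt N \<ge> 1" using N1 by simp
    thus "real (card T) \<le> 3 * sqrt N" using cw(2) by linarith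
  qed (auto intro: sum_nonneg)
  finally have A: "(\<Sum>k\<in>T. (pmf \<rho> k)\<^sup>2) \<ge> 1 / (12 * sqrt N)"
    using N1 by (simp add: field_simps)
  have "measure_pmf.prob (pair_pmf G G) {z. Rc (fst z) = Rc (snd z)}
      = measure_pmf.prob (pair_pmf \<rho> \<rho>) {z. fst z = snd z}"
  proof -
    have "pair_pmf \<rho> \<rho> = map_pmf (\<lambda>(a, b). (Rc a, Rc b)) (pair_pmf G G)"
      unfolding \<rho>_def by (simp add: map_pair)
    thus ?thesis by (simp add: vimage_def case_prod_unfold)
  qed
  also have "\<dots> \<ge> measure_pmf.prob (pair_pmf \<rho> \<rho>) ((\<lambda>k. (k,k)) ` T)"
    by (intro measure_pmf.finite_measure_mono) auto
  also have "measure_pmf.prob (pair_pmf \<rho> \<rho>) ((\<lambda>k. (k,k)) ` T) = (\<Sum>k\<in>T. (pmf \<rho> k)\<^sup>2)"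
  proof -
    have "measure_pmf.prob (pair_pmf \<rho> \<rho>) ((\<lambda>k. (k,k)) ` T) = (\<Sum>z\<in>(\<lambda>k. (k,k)) ` T. pmf (pair_pmf \<rho> \<rho>) z)"
      using cw(1) by (simp add: measure_measure_pmf_finite)
    also have "\<dots> = (\<Sum>k\<in>T. pmf (pair_pmf \<rho> \<rho>) (k,k))"
      by (subst sum.reindex) (auto simp: inj_on_def)
    finally show ?thesis by (simp add: pmf_pair power2_eq_square)
  qed
  finally show ?thesis using A unfolding G_def Rc_def N_def by simp
qed



lemma nn_swap_pmf:
  "(\<integral>\<^sup>+x. \<integral>\<^sup>+y. f x y \<partial>measure_pmf N \<partial>measure_pmf M) = (\<integral>\<^sup>+y. \<integral>\<^sup>+x. f x y \<partial>measure_pmf M \<partial>measure_pmf N)"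
proof -
  have "(\<integral>\<^sup>+x. \<integral>\<^sup>+y. f x y \<partial>N \<partial>M) = (\<integral>\<^sup>+z. f (fst z) (snd z) \<partial>pair_pmf M N)"
    by (simp add: nn_integral_pair_pmf')
  also have "\<dots> = (\<integral>\<^sup>+z. f (snd z) (fst z) \<partial>pair_pmf N M)"
    by (subst pair_commute_pmf) (simp add: case_prod_unfold)
  also have "\<dots> = (\<integral>\<^sup>+y. \<integral>\<^sup>+x. f x y \<partial>M \<partial>N)"
    by (simp add: nn_integral_pair_pmf')
  finally show ?thesis .
qed

lemma bern_nn:
  fixes f :: "bool \<Rightarrow> real"
  assumes "\<And>b. f b \<ge> 0"
  shows "(\<integral>\<^sup>+v. ennreal (f (v = a)) \<partial>measure_pmf V) = ennreal (pmf V a * f True + (1 - pmf V a) * f False)"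
proof -
  have m: "map_pmf (\<lambda>v. v = a) V = bernoulli_pmf (pmf V a)"
  proof (rule pmf_eqI)
    fix b :: bool
    have "pmf (map_pmf (\<lambda>v. v = a) V) b = measure_pmf.prob V ((\<lambda>v. v = a) -` {b})" by (simp add: pmf_map)
    also have "\<dots> = (if b then pmf V a else 1 - pmf V a)"
    proof (cases b)
      case True
      then show ?thesis by (simp add: vimage_def measure_pmf_single)
    next
      case False
      have "(\<lambda>v. v = a) -` {b} = space (measure_pmf V) - {a}" using False by auto
      moreover have "measure_pmf.prob V (space (measure_pmf V) - {a}) = 1 - measure_pmf.prob V {a}"
        by (rule measure_pmf.prob_compl) auto
      ultimately show ?thesis using False by (simp add: measure_pmf_single)
    qed
    finally show "pmf (map_pmf (\<lambda>v. v = a) V) b = pmf (bernoulli_pmf (pmf V a)) b"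
      by (simp add: pmf_le_1)
  qed
  have "(\<integral>\<^sup>+v. ennreal (f (v = a)) \<partial>measure_pmf V) = (\<integral>\<^sup>+b. ennreal (f b) \<partial>measure_pmf (map_pmf (\<lambda>v. v = a) V))"
    by simp
  also have "\<dots> = (\<Sum>b\<in>UNIV. ennreal (f b) * pmf (bernoulli_pmf (pmf V a)) b)"
    unfolding m by (rule nn_integral_measure_pmf_support) auto
  also have "\<dots> = ennreal (f True) * ennreal (pmf V a) + ennreal (f False) * ennreal (1 - pmf V a)"
    by (simp add: UNIV_bool pmf_le_1)
  also have "\<dots> = ennreal (pmf V a * f True + (1 - pmf V a) * f False)"
  proof -
    have q: "0 \<le> pmf V a" "0 \<le> 1 - pmf V a" by (auto simp: pmf_le_1)
    have "ennreal (pmf V a * f True + (1 - pmf V a) * f False) = ennreal (pmf V a * f True) + ennreal ((1 - pmf V a) * f False)"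
      using q assms by (intro ennreal_plus) auto
    also have "\<dots> = ennreal (f True) * ennreal (pmf V a) + ennreal (f False) * ennreal (1 - pmf V a)"
      using q assms by (simp add: ennreal_mult mult.commute)
    finally show ?thesis by simp
  qed
  finally show ?thesis .
qed

definition wfun :: "bool \<Rightarrow> bool \<Rightarrow> nat \<Rightarrow> nat \<Rightarrow> real" where
  "wfun A B a b = (if of_bool A + a < of_bool B + b then of_bool B - of_bool A else of_bool A - of_bool B)"

lemma inner_real:
  fixes q l :: real and a b :: nat
  assumes q: "0 \<le> q" "q \<le> 1" and l: "l \<ge> 0"
  defines "Q \<equiv> (\<lambda>A B. exp (- l * wfun A B a b))"
  defines "s \<equiv> q * (1 - q)"
  shows "q * (q * Q True True + (1-q) * Q True False) + (1-q) * (q * Q False True + (1-q) * Q False False)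
       \<le> (1 - 2 * s * (1 - exp (-l))) + (if a = b then 0 else s * (exp l - exp (-l)))"
proof -
  have TT: "Q True True = 1" and FF: "Q False False = 1" unfolding Q_def wfun_def by auto
  have el: "exp (-l) \<le> exp l" using l by simp
  have s0: "s \<ge> 0" unfolding s_def using q by simp
  have lhs: "q * (q * Q True True + (1-q) * Q True False) + (1-q) * (q * Q False True + (1-q) * Q False False)
     = 1 - 2 * s + s * (Q True False + Q False True)"
    unfolding TT FF s_def by algebra
  have "Q True False + Q False True \<le> 2 * exp (-l) + (if a = b then 0 else exp l - exp (-l))"
  proof (cases "a = b")
    case True
    then show ?thesis unfolding Q_def wfun_def by simp
  next
    case False
    then consider "1 + a < b" | "a + 1 = b" | "a > b" by linarith
    then show ?thesis
    proof cases
      case 1 then show ?thesis using False unfolding Q_def wfun_def by simp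
    next
      case 2 then show ?thesis using False el unfolding Q_def wfun_def by simp
    next
      case 3 then show ?thesis using False unfolding Q_def wfun_def by simp
    qed
  qed
  hence "s * (Q True False + Q False True) \<le> s * (2 * exp (-l) + (if a = b then 0 else exp l - exp (-l)))"
    using s0 by (intro mult_left_mono)
  thus ?thesis unfolding lhs by (auto simp: algebra_simps)
qed



lemma onemax_upd:
  assumes "i < n"
  shows "r_onemax n r (g(i:=v)) = of_bool (v = r-1) + card {j\<in>{..<n}-{i}. g j = r-1}"
proof -
  define S where "S = {j\<in>{..<n}-{i}. g j = r-1}"
  have fS: "finite S" "i \<notin> S" unfolding S_def by auto
  have "{j. j < n \<and> (g(i:=v)) j = r - 1} = (if v = r-1 then insert i S else S)"
    unfolding S_def using assms by auto
  thus ?thesis unfolding r_onemax_def S_def[symmetric] using fS by auto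
qed

lemma sample_decomp:
  assumes "i < n"
  shows "sample_string n r p = map_pmf (\<lambda>(v,g). g(i:=v))
           (pair_pmf (pos_pmf r p i) (Pi_pmf ({..<n}-{i}) 0 (pos_pmf r p)))"
proof -
  have "{..<n} = insert i ({..<n}-{i})" using assms by auto
  thus ?thesis unfolding sample_string_def by (metis Pi_pmf_insert finite_Diff finite_lessThan Diff_iff insertI1)
qed

lemma step_decomp:
  "cga_step n r K p = map_pmf (\<lambda>(x,y). if r_onemax n r x < r_onemax n r y
        then cga_update K p y x else cga_update K p x y)
     (pair_pmf (sample_string n r p) (sample_string n r p))"
  unfolding cga_step_def pair_pmf_def by (simp add: map_bind_pmf map_return_pmf)

lemma final_real:
  fixes l :: real
  assumes "0 \<le> l" "l < 1"
  shows "(exp l - exp (-l)) * (1 - l) \<le> 2 * (1 - exp (-l))"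
proof -
  define e where "e = exp l"
  have e1: "e \<ge> 1" unfolding e_def using assms by simp
  have "exp (-l) \<ge> 1 - l" using exp_ge_add_one_self[of "-l"] by simp
  hence "1 / e \<ge> 1 - l" unfolding e_def by (simp add: exp_minus field_simps)
  hence el: "e * (1 - l) \<le> 1" using e1 by (simp add: field_simps)
  have em: "exp (-l) = 1 / e" unfolding e_def by (simp add: exp_minus field_simps)
  have "(e - 1/e) * (1 - l) \<le> 2 * (1 - 1/e)"
  proof -
    have "(e*e - 1) * (1 - l) \<le> 2 * (e - 1)"
    proof -
      have "(e*e - 1) * (1 - l) = (e - 1) * ((e + 1) * (1 - l))" by algebra
      also have "\<dots> \<le> (e - 1) * 2"
        using el e1 assms by (intro mult_left_mono) (auto simp: algebra_simps)
      finally show ?thesis by simp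
    qed
    hence "((e*e - 1) * (1 - l)) / e \<le> (2 * (e - 1)) / e" using e1 by (intro divide_right_mono) auto
    moreover have "((e*e - 1) * (1 - l)) / e = (e - 1/e) * (1-l)" using e1 by (simp add: field_simps)
    moreover have "(2 * (e - 1)) / e = 2 * (1 - 1/e)" using e1 by (simp add: field_simps)
    ultimately show ?thesis by simp
  qed
  thus ?thesis unfolding em e_def .
qed



lemma key:
  fixes n r i :: nat and p :: "nat \<Rightarrow> nat \<Rightarrow> real"
  assumes i: "i < n" and n2: "n \<ge> 2"
  defines "S \<equiv> sample_string n r p" and "l \<equiv> 1 / (144 * sqrt (real n))"
  defines "w \<equiv> (\<lambda>x y. if r_onemax n r x < r_onemax n r y
                 then of_bool (y i = r-1) - of_bool (x i = r-1)
                 else of_bool (x i = r-1) - (of_bool (y i = r-1)::real))"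
  shows "(\<integral>\<^sup>+z. ennreal (exp (- l * w (fst z) (snd z))) \<partial>pair_pmf S S) \<le> 1"
proof -
  define V where "V = pos_pmf r p i"
  define B where "B = {..<n} - {i}"
  define G where "G = Pi_pmf B 0 (pos_pmf r p)"
  define Rc where "Rc = (\<lambda>g::nat\<Rightarrow>nat. card {j\<in>B. g j = r - 1})"
  define Q where "Q = (\<lambda>A B' a b. exp (- l * wfun A B' a b))"
  define q where "q = pmf V (r - 1)"
  define s where "s = q * (1 - q)"
  define c1 where "c1 = 1 - 2 * s * (1 - exp (-l))"
  define c2 where "c2 = s * (exp l - exp (-l))"
  have l0: "l > 0" unfolding l_def using n2 by simp
  have l1: "l < 1"
  proof -
    have "sqrt (real n) \<ge> 1" using n2 by simp
    hence "144 * sqrt (real n) > 1" by linarith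
    thus ?thesis unfolding l_def by (auto simp: divide_less_eq_1)
  qed
  have q01: "0 \<le> q" "q \<le> 1" unfolding q_def by (auto simp: pmf_le_1)
  have s0: "0 \<le> s" unfolding s_def using q01 by simp
  have "1/4 - s = (q - 1/2)\<^sup>2" unfolding s_def by (simp add: power2_eq_square algebra_simps)
  hence s4: "s \<le> 1/4" by (metis diff_ge_0_iff_ge zero_le_power2)
  have c1: "c1 \<ge> 0"
  proof -
    have "1 - exp (-l) \<le> 1" by simp
    hence "2 * s * (1 - exp (-l)) \<le> 2 * s * 1" using s0 by (intro mult_left_mono) auto
    thus ?thesis unfolding c1_def using s4 by simp
  qed
  have c2: "c2 \<ge> 0" unfolding c2_def using s0 l0 by simp
  have S_dec: "S = map_pmf (\<lambda>(v,g). g(i:=v)) (pair_pmf V G)"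
    unfolding S_def V_def G_def B_def by (rule sample_decomp[OF i])
  have w_upd: "w (g1(i:=v1)) (g2(i:=v2)) = wfun (v1 = r-1) (v2 = r-1) (Rc g1) (Rc g2)" for g1 g2 v1 v2
    unfolding w_def wfun_def Rc_def B_def onemax_upd[OF i] by simp
  have "(\<integral>\<^sup>+z. ennreal (exp (- l * w (fst z) (snd z))) \<partial>pair_pmf S S)
      = (\<integral>\<^sup>+v1. \<integral>\<^sup>+g1. \<integral>\<^sup>+v2. \<integral>\<^sup>+g2. ennreal (Q (v1 = r-1) (v2 = r-1) (Rc g1) (Rc g2)) \<partial>G \<partial>V \<partial>G \<partial>V)"
    unfolding S_dec by (simp add: nn_integral_pair_pmf' w_upd Q_def)
  also have "\<dots> = (\<integral>\<^sup>+v1. \<integral>\<^sup>+g1. \<integral>\<^sup>+g2. \<integral>\<^sup>+v2. ennreal (Q (v1 = r-1) (v2 = r-1) (Rc g1) (Rc g2)) \<partial>V \<partial>G \<partial>G \<partial>V)"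
    apply (rule nn_integral_cong) apply (rule nn_integral_cong) apply (rule nn_swap_pmf) done
  also have "\<dots> = (\<integral>\<^sup>+g1. \<integral>\<^sup>+v1. \<integral>\<^sup>+g2. \<integral>\<^sup>+v2. ennreal (Q (v1 = r-1) (v2 = r-1) (Rc g1) (Rc g2)) \<partial>V \<partial>G \<partial>V \<partial>G)"
    by (rule nn_swap_pmf)
  also have "\<dots> = (\<integral>\<^sup>+g1. \<integral>\<^sup>+g2. \<integral>\<^sup>+v1. \<integral>\<^sup>+v2. ennreal (Q (v1 = r-1) (v2 = r-1) (Rc g1) (Rc g2)) \<partial>V \<partial>V \<partial>G \<partial>G)"
    apply (rule nn_integral_cong) apply (rule nn_swap_pmf) done
  also have "\<dots> \<le> (\<integral>\<^sup>+g1. \<integral>\<^sup>+g2. ennreal (c1 + c2 * indicator {z. Rc (fst z) \<noteq> Rc (snd z)} (g1, g2)) \<partial>G \<partial>G)"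
  proof (intro nn_integral_mono)
    fix g1 g2
    define a where "a = Rc g1"
    define b where "b = Rc g2"
    have Qnn: "Q A B' a b \<ge> 0" for A B' unfolding Q_def by simp
    have "(\<integral>\<^sup>+v1. \<integral>\<^sup>+v2. ennreal (Q (v1 = r-1) (v2 = r-1) a b) \<partial>V \<partial>V)
        = (\<integral>\<^sup>+v1. ennreal (q * Q (v1 = r-1) True a b + (1 - q) * Q (v1 = r-1) False a b) \<partial>V)"
      unfolding q_def apply (rule nn_integral_cong) apply (rule bern_nn[where f = "\<lambda>B'. Q _ B' a b"]) apply (rule Qnn) done
    also have "\<dots> = ennreal (q * (q * Q True True a b + (1-q) * Q True False a b)
                    + (1-q) * (q * Q False True a b + (1-q) * Q False False a b))"
      unfolding q_def
      by (rule bern_nn[where f = "\<lambda>A. pmf V (r-1) * Q A True a b + (1 - pmf V (r-1)) * Q A False a b"])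
         (use Qnn q01 in \<open>auto simp: q_def intro!: add_nonneg_nonneg mult_nonneg_nonneg\<close>)
    also have "\<dots> \<le> ennreal (c1 + (if a = b then 0 else c2))"
      unfolding c1_def c2_def s_def Q_def using inner_real[OF q01 less_imp_le[OF l0], of a b]
      by (intro ennreal_leI) simp
    finally have X: "(\<integral>\<^sup>+v1. \<integral>\<^sup>+v2. ennreal (Q (v1 = r-1) (v2 = r-1) a b) \<partial>V \<partial>V)
        \<le> ennreal (c1 + (if a = b then 0 else c2))" .
    have Y: "(if a = b then 0 else c2) = c2 * indicator {z. Rc (fst z) \<noteq> Rc (snd z)} (g1, g2)"
      unfolding a_def b_def by (simp add: indicator_def)
    show "(\<integral>\<^sup>+v1. \<integral>\<^sup>+v2. ennreal (Q (v1 = r-1) (v2 = r-1) (Rc g1) (Rc g2)) \<partial>V \<partial>V)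
        \<le> ennreal (c1 + c2 * indicator {z. Rc (fst z) \<noteq> Rc (snd z)} (g1, g2))"
      using X[unfolded Y] by (simp only: a_def b_def)
  qed
  also have "\<dots> = (\<integral>\<^sup>+z. ennreal c1 + ennreal c2 * indicator {z. Rc (fst z) \<noteq> Rc (snd z)} z \<partial>pair_pmf G G)"
    using c1 c2 unfolding nn_integral_pair_pmf' by (intro nn_integral_cong) (auto simp: indicator_def ennreal_plus)
  also have "\<dots> = ennreal c1 + ennreal c2 * emeasure (pair_pmf G G) {z. Rc (fst z) \<noteq> Rc (snd z)}"
    by (simp add: nn_integral_add nn_integral_cmult_indicator measure_pmf.emeasure_space_1)
  also have "\<dots> \<le> ennreal c1 + ennreal c2 * ennreal (1 - l)"
  proof -
    have cardB: "card B = n - 1" "finite B" unfolding B_def using i by auto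
    have coll: "measure_pmf.prob (pair_pmf G G) {z. Rc (fst z) = Rc (snd z)} \<ge> 1 / (12 * sqrt (card B))"
      unfolding G_def Rc_def by (rule collision) (use cardB n2 in auto)
    have "1 / (12 * sqrt (card B)) \<ge> l"
    proof -
      have "sqrt (card B) \<le> sqrt n" using cardB by simp
      hence le: "12 * sqrt (card B) \<le> 144 * sqrt n" using real_sqrt_ge_zero[of "real n"] by linarith
      have "sqrt (card B) > 0" using cardB n2 by simp
      moreover have "sqrt n > 0" using n2 by simp
      ultimately have "0 < (144 * sqrt n) * (12 * sqrt (card B))" by simp
      thus ?thesis unfolding l_def by (rule divide_left_mono[OF le, of 1, rotated]) simp
    qed
    have "emeasure (pair_pmf G G) {z. Rc (fst z) \<noteq> Rc (snd z)}
       = ennreal (1 - measure_pmf.prob (pair_pmf G G) {z. Rc (fst z) = Rc (snd z)})"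
    proof -
      have "{z. Rc (fst z) \<noteq> Rc (snd z)} = space (measure_pmf (pair_pmf G G)) - {z. Rc (fst z) = Rc (snd z)}" by auto
      moreover have "measure_pmf.prob (pair_pmf G G) (space (measure_pmf (pair_pmf G G)) - {z. Rc (fst z) = Rc (snd z)})
          = 1 - measure_pmf.prob (pair_pmf G G) {z. Rc (fst z) = Rc (snd z)}"
        by (rule measure_pmf.prob_compl) auto
      ultimately show ?thesis by (simp add: measure_pmf.emeasure_eq_measure)
    qed
    also have "\<dots> \<le> ennreal (1 - l)" using coll \<open>1 / (12 * sqrt (card B)) \<ge> l\<close> by (intro ennreal_leI) simp
    finally show ?thesis by (intro add_left_mono mult_left_mono) auto
  qed
  also have "\<dots> = ennreal (c1 + c2 * (1 - l))"
    using c1 c2 l1 by (simp add: ennreal_plus ennreal_mult')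
  also have "\<dots> \<le> 1"
  proof -
    have "c2 * (1 - l) \<le> 2 * s * (1 - exp (-l))"
      unfolding c2_def using final_real[OF less_imp_le[OF l0] l1] s0
      by (metis (no_types, opaque_lifting) mult.assoc mult.commute mult_left_mono)
    hence "1 - 2 * s * (1 - exp (- l)) + c2 * (1 - l) \<le> 1" by simp
    hence "ennreal (1 - 2 * s * (1 - exp (- l)) + c2 * (1 - l)) \<le> ennreal 1" by (rule ennreal_leI)
    thus ?thesis unfolding c1_def by simp
  qed
  finally show ?thesis .
qed



lemma step_bound:
  fixes n r i :: nat and p :: "nat \<Rightarrow> nat \<Rightarrow> real" and K \<theta> :: real
  assumes i: "i < n" and n2: "n \<ge> 2" and K: "K > 0"
  shows "(\<integral>\<^sup>+q. ennreal (exp (- (1 / (144 * sqrt (real n))) * K * (q i (r-1) - \<theta>))) \<partial>cga_step n r K p)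
         \<le> ennreal (exp (- (1 / (144 * sqrt (real n))) * K * (p i (r-1) - \<theta>)))"
proof -
  define l where "l = 1 / (144 * sqrt (real n))"
  define S where "S = sample_string n r p"
  define w where "w = (\<lambda>x y. if r_onemax n r x < r_onemax n r y
                 then of_bool (y i = r-1) - of_bool (x i = r-1)
                 else of_bool (x i = r-1) - (of_bool (y i = r-1)::real))"
  define C where "C = exp (- l * K * (p i (r-1) - \<theta>))"
  have upd: "(if r_onemax n r x < r_onemax n r y then cga_update K p y x else cga_update K p x y) i (r-1)
        = p i (r-1) + w x y / K" for x y
    unfolding w_def cga_update_def by (auto simp: field_simps)
  have ex: "exp (- l * K * ((p i (r-1) + w x y / K) - \<theta>)) = C * exp (- l * w x y)" for x y
  proof -
    have "- l * K * ((p i (r-1) + w x y / K) - \<theta>) = - l * K * (p i (r-1) - \<theta>) + (- l * w x y)"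
      using K by (simp add: field_simps)
    thus ?thesis unfolding C_def by (metis exp_add)
  qed
  have "(\<integral>\<^sup>+q. ennreal (exp (- l * K * (q i (r-1) - \<theta>))) \<partial>cga_step n r K p)
      = (\<integral>\<^sup>+z. ennreal C * ennreal (exp (- l * w (fst z) (snd z))) \<partial>pair_pmf S S)"
    unfolding step_decomp S_def[symmetric] nn_integral_map_pmf
  proof (intro nn_integral_cong)
    fix z :: "(nat \<Rightarrow> nat) \<times> (nat \<Rightarrow> nat)"
    obtain x y where z: "z = (x, y)" by (cases z)
    have C0: "C \<ge> 0" unfolding C_def by simp
    show "ennreal (exp (- l * K * ((case z of (x, y) \<Rightarrow> if r_onemax n r x < r_onemax n r y
        then cga_update K p y x else cga_update K p x y) i (r - 1) - \<theta>)))
        = ennreal C * ennreal (exp (- l * w (fst z) (snd z)))"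
      unfolding z prod.case upd ex fst_conv snd_conv using C0 by (simp add: ennreal_mult)
  qed
  also have "\<dots> = ennreal C * (\<integral>\<^sup>+z. ennreal (exp (- l * w (fst z) (snd z))) \<partial>pair_pmf S S)"
    by (rule nn_integral_cmult) auto
  also have "\<dots> \<le> ennreal C * 1"
    unfolding l_def w_def S_def by (intro mult_left_mono key[OF i n2]) auto
  finally show ?thesis unfolding C_def l_def by simp
qed

lemma path_bound:
  fixes n r i :: nat and K \<theta> :: real
  assumes i: "i < n" and n2: "n \<ge> 2" and K: "K > 0"
  shows "emeasure (measure_pmf (cga_path n r K p m)) {qs. \<exists>q\<in>set qs. q i (r-1) < \<theta>}
         \<le> ennreal (exp (- (1 / (144 * sqrt (real n))) * K * (p i (r-1) - \<theta>)))"
proof (induction m arbitrary: p)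
  case 0
  then show ?case by simp
next
  case (Suc m)
  define l where "l = 1 / (144 * sqrt (real n))"
  have l0: "l > 0" unfolding l_def using n2 by simp
  define E where "E = {qs. \<exists>q\<in>set qs. q i (r-1) < \<theta>}"
  have "emeasure (measure_pmf (cga_path n r K p (Suc m))) E
      = (\<integral>\<^sup>+q. emeasure (measure_pmf (cga_path n r K q m)) ((#) q -` E) \<partial>cga_step n r K p)"
    by (simp add: emeasure_map_pmf)
  also have "\<dots> \<le> (\<integral>\<^sup>+q. ennreal (exp (- l * K * (q i (r-1) - \<theta>))) \<partial>cga_step n r K p)"
  proof (intro nn_integral_mono)
    fix q :: "nat \<Rightarrow> nat \<Rightarrow> real"
    show "emeasure (measure_pmf (cga_path n r K q m)) ((#) q -` E) \<le> ennreal (exp (- l * K * (q i (r-1) - \<theta>)))"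
    proof (cases "q i (r-1) < \<theta>")
      case True
      have "emeasure (measure_pmf (cga_path n r K q m)) ((#) q -` E) \<le> 1"
        by (rule measure_pmf.emeasure_le_1)
      also have "(1::ennreal) \<le> ennreal (exp (- l * K * (q i (r-1) - \<theta>)))"
      proof -
        have "l * K * (q i (r-1) - \<theta>) \<le> 0" by (rule mult_nonneg_nonpos) (use True l0 K in auto)
        hence "1 \<le> exp (- l * K * (q i (r-1) - \<theta>))" by simp
        hence "ennreal 1 \<le> ennreal (exp (- l * K * (q i (r-1) - \<theta>)))" by (rule ennreal_leI)
        thus ?thesis by simp
      qed
      finally show ?thesis .
    next
      case False
      hence "(#) q -` E = E" unfolding E_def by auto
      thus ?thesis using Suc.IH[of q] unfolding E_def l_def by simp
    qed
  qed
  also have "\<dots> \<le> ennreal (exp (- l * K * (p i (r-1) - \<theta>)))"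
    unfolding l_def by (rule step_bound[OF i n2 K])
  finally show ?case unfolding E_def l_def .
qed



theorem lemma2:
  fixes d :: nat
  shows "\<exists>c>0. \<exists>c'>0. \<exists>n0::nat. \<forall>n r t i. \<forall>K::real. \<forall>k::real. \<forall>p.
     n \<ge> n0 \<longrightarrow> r \<ge> 2 \<longrightarrow> i < n \<longrightarrow> k > 0 \<longrightarrow>
     K \<ge> c * real r * sqrt (real n) * ln (real n) \<longrightarrow>
     K \<le> real n ^ d \<longrightarrow> real r \<le> real n ^ d \<longrightarrow>
     p \<in> set_pmf (cga_state n r K t) \<longrightarrow> p i (r - 1) \<ge> k / real r \<longrightarrow>
     measure_pmf.prob
       (cga_path n r K p (nat \<lfloor>c' * K * sqrt (real n) * ln (real r)\<rfloor>))
       {qs. \<exists>q\<in>set qs. q i (r - 1) < k / real r - 1 / (2 * real r)}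
     \<le> real n powr (- (K / (288 * real r * sqrt (real n) * ln (real n))))"
proof (rule exI[of _ 1], rule conjI, simp, rule exI[of _ 1], rule conjI, simp, rule exI[of _ "2::nat"], intro allI impI)
  fix n r t i :: nat and K k :: real and p :: "nat \<Rightarrow> nat \<Rightarrow> real"
  assume n2: "2 \<le> n" and r2: "2 \<le> r" and i: "i < n" and k: "k > 0"
    and Kb: "1 * real r * sqrt (real n) * ln (real n) \<le> K"
    and pk: "k / real r \<le> p i (r - 1)"
  define m where "m = nat \<lfloor>1 * K * sqrt (real n) * ln (real r)\<rfloor>"
  define \<theta> where "\<theta> = k / real r - 1 / (2 * real r)"
  define l where "l = 1 / (144 * sqrt (real n))"
  have ln0: "ln (real n) > 0" using n2 by simp
  have sq0: "sqrt (real n) > 0" using n2 by simp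
  have r0: "real r > 0" using r2 by simp
  have K0: "K > 0"
  proof -
    have "0 < 1 * real r * sqrt (real n) * ln (real n)" using ln0 sq0 r0 by simp
    thus ?thesis using Kb by linarith
  qed
  have l0: "l > 0" unfolding l_def using sq0 by simp
  have em: "emeasure (measure_pmf (cga_path n r K p m)) {qs. \<exists>q\<in>set qs. q i (r-1) < \<theta>}
         \<le> ennreal (exp (- l * K * (p i (r-1) - \<theta>)))"
    unfolding l_def by (rule path_bound[OF i n2 K0])
  hence pr: "measure_pmf.prob (cga_path n r K p m) {qs. \<exists>q\<in>set qs. q i (r-1) < \<theta>}
         \<le> exp (- l * K * (p i (r-1) - \<theta>))"
    by (simp add: measure_pmf.emeasure_eq_measure)
  have gap: "p i (r-1) - \<theta> \<ge> 1 / (2 * real r)" unfolding \<theta>_def using pk by simp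
  have "exp (- l * K * (p i (r-1) - \<theta>)) \<le> exp (- l * K * (1 / (2 * real r)))"
  proof -
    have "l * K * (1 / (2 * real r)) \<le> l * K * (p i (r-1) - \<theta>)"
      using gap l0 K0 by (intro mult_left_mono) auto
    thus ?thesis by simp
  qed
  also have "- l * K * (1 / (2 * real r)) = ln (real n) * (- (K / (288 * real r * sqrt (real n) * ln (real n))))"
    unfolding l_def using ln0 sq0 r0 by (simp add: field_simps)
  also have "exp \<dots> = real n powr (- (K / (288 * real r * sqrt (real n) * ln (real n))))"
    unfolding powr_def using n2 by simp
  finally show "measure_pmf.prob (cga_path n r K p (nat \<lfloor>1 * K * sqrt (real n) * ln (real r)\<rfloor>))
       {qs. \<exists>q\<in>set qs. q i (r - 1) < k / real r - 1 / (2 * real r)}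
     \<le> real n powr (- (K / (288 * real r * sqrt (real n) * ln (real n))))"
    using pr unfolding m_def \<theta>_def by linarith
qed


end
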